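(* For any pair of jointly distributed finite-valued random variables $(X,Y)\sim p_{XY}$: (a) $\tilde C_W(Y\backslash X)=H(Q_Y^X)$; (b) $\tilde P_W(Y\backslash X)=H(Y|Q_Y^X)$; (c) $H(Y)=\tilde C_W(Y\backslash X)+\tilde P_W(Y\backslash X)=H(Q_Y^X)+H(Y|Q_Y^X)$; (d) $C_W(X;Y)\leq \tilde C_W(Y\backslash X)$.
   Context: For finite-valued random variables, $A-B-C$ means that $A$ and $C$ are conditionally independent given $B$. Optimizations below are over finite-valued random variables $Q$ jointly distributed with $(X,Y)$ (marginal of $(X,Y)$ fixed). Define $\tilde P_W(Y\backslash X)=\max\{H(Y|Q): X-Q-Y \text{ and } X-Y-Q\}$, $\tilde C_W(Y\backslash X)=\min\{H(Q): X-Q-Y \text{ and } X-Y-Q\}$, and Wyner's common information $C_W(X;Y)=\min\{I(XY;Q): X-Q-Y\}$, where $XY$ denotes the joint variable $(X,Y)$. Let $Q_Y^X=f(Y)$ with $f(y)=p_{X|Y}(\cdot|y)$ (a distribution on the alphabet of $X$), i.e. $Q_Y^X$ identifies values of $Y$ inducing the same conditional distribution of $X$. *)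

theory Defs
  imports "HOL-Probability.Probability"
begin

definition ent :: "'a pmf \<Rightarrow> real" where
  "ent P = - (\<Sum>a\<in>set_pmf P. pmf P a * log 2 (pmf P a))"

definition cond_ent :: "('a \<times> 'b) pmf \<Rightarrow> real" where
  "cond_ent P = ent P - ent (map_pmf snd P)"

definition mut_info :: "('a \<times> 'b) pmf \<Rightarrow> real" where
  "mut_info P = ent (map_pmf fst P) + ent (map_pmf snd P) - ent P"

(* A - B - C : A and C conditionally independent given B,
   for a joint distribution of (A,B,C) *)
definition markov :: "('a \<times> 'b \<times> 'c) pmf \<Rightarrow> bool" where
  "markov P \<longleftrightarrow> (\<forall>a b c.
     pmf P (a, b, c) * pmf (map_pmf (\<lambda>(a,b,c). b) P) b =
     pmf (map_pmf (\<lambda>(a,b,c). (a,b)) P) (a, b) * pmf (map_pmf (\<lambda>(a,b,c). (b,c)) P) (b, c))"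

(* joint distributions of (X,Y,Q) with Q finite-valued (alphabet embedded in nat)
   and (X,Y)-marginal equal to p *)
definition couplings :: "('x \<times> 'y) pmf \<Rightarrow> ('x \<times> 'y \<times> nat) pmf set" where
  "couplings p = {r. finite (set_pmf r) \<and> map_pmf (\<lambda>(x,y,q). (x,y)) r = p}"

definition XQY :: "('x \<times> 'y \<times> nat) pmf \<Rightarrow> ('x \<times> nat \<times> 'y) pmf" where
  "XQY r = map_pmf (\<lambda>(x,y,q). (x,q,y)) r"

(* \tilde P_W(Y\X) = max { H(Y|Q) : X-Q-Y and X-Y-Q } *)
definition tilde_PW :: "('x \<times> 'y) pmf \<Rightarrow> real" where
  "tilde_PW p = Sup {cond_ent (map_pmf (\<lambda>(x,y,q). (y,q)) r) | r.
      r \<in> couplings p \<and> markov (XQY r) \<and> markov r}"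

(* \tilde C_W(Y\X) = min { H(Q) : X-Q-Y and X-Y-Q } *)
definition tilde_CW :: "('x \<times> 'y) pmf \<Rightarrow> real" where
  "tilde_CW p = Inf {ent (map_pmf (\<lambda>(x,y,q). q) r) | r.
      r \<in> couplings p \<and> markov (XQY r) \<and> markov r}"

(* Wyner's common information C_W(X;Y) = min { I(XY;Q) : X-Q-Y } *)
definition wyner_CW :: "('x \<times> 'y) pmf \<Rightarrow> real" where
  "wyner_CW p = Inf {mut_info (map_pmf (\<lambda>(x,y,q). ((x,y),q)) r) | r.
      r \<in> couplings p \<and> markov (XQY r)}"

(* f(y) = p_{X|Y}(.|y) *)
definition condX :: "('x \<times> 'y) pmf \<Rightarrow> 'y \<Rightarrow> ('x \<Rightarrow> real)" where
  "condX p y = (\<lambda>x. pmf p (x, y) / pmf (map_pmf snd p) y)"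

(* distribution of Q_Y^X = f(Y) *)
definition QYX :: "('x \<times> 'y) pmf \<Rightarrow> ('x \<Rightarrow> real) pmf" where
  "QYX p = map_pmf (\<lambda>(x,y). condX p y) p"

definition Y_QYX :: "('x \<times> 'y) pmf \<Rightarrow> ('y \<times> ('x \<Rightarrow> real)) pmf" where
  "Y_QYX p = map_pmf (\<lambda>(x,y). (y, condX p y)) p"

end

theory Submission
  imports Defs
begin

lemma pmf_map_sum:
  assumes "finite (set_pmf P)"
  shows "pmf (map_pmf f P) b = (\<Sum>a\<in>set_pmf P. if f a = b then pmf P a else 0)"
proof -
  have "pmf (map_pmf f P) b = measure_pmf.prob P (f -` {b} \<inter> set_pmf P)"
    by (simp add: pmf_map measure_Int_set_pmf)
  also have "\<dots> = sum (pmf P) (f -` {b} \<inter> set_pmf P)"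
    using assms by (simp add: measure_measure_pmf_finite)
  also have "\<dots> = (\<Sum>a\<in>set_pmf P. if f a = b then pmf P a else 0)" (is "?l = ?r")
  proof -
    have "f -` {b} \<inter> set_pmf P = {a\<in>set_pmf P. f a = b}" by auto
    thus "?l = ?r" using assms by (simp add: sum.inter_filter)
  qed
  finally show ?thesis .
qed

lemma exp_map:
  assumes "finite (set_pmf P)"
  shows "(\<Sum>a\<in>set_pmf P. h (f a) * pmf P a) =
         (\<Sum>b\<in>set_pmf (map_pmf f P). h b * pmf (map_pmf f P) b)"
proof -
  have "(\<Sum>b\<in>set_pmf (map_pmf f P). h b * pmf (map_pmf f P) b)
     = (\<Sum>b\<in>f ` set_pmf P. (\<Sum>a\<in>{a\<in>set_pmf P. f a = b}. h (f a) * pmf P a))"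
  proof (rule sum.cong)
    fix b assume "b \<in> f ` set_pmf P"
    have "h b * pmf (map_pmf f P) b = h b * (\<Sum>a\<in>set_pmf P. if f a = b then pmf P a else 0)"
      using assms by (simp add: pmf_map_sum)
    also have "\<dots> = (\<Sum>a\<in>{a\<in>set_pmf P. f a = b}. h b * pmf P a)"
      using assms by (simp add: sum_distrib_left sum.inter_filter[symmetric] if_distrib cong: if_cong)
    also have "\<dots> = (\<Sum>a\<in>{a\<in>set_pmf P. f a = b}. h (f a) * pmf P a)"
      by (rule sum.cong) auto
    finally show "h b * pmf (map_pmf f P) b = (\<Sum>a\<in>{a\<in>set_pmf P. f a = b}. h (f a) * pmf P a)" .
  qed simp
  also have "\<dots> = (\<Sum>a\<in>set_pmf P. h (f a) * pmf P a)"
    using assms by (intro sum.group) auto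
  finally show ?thesis by simp
qed

lemma ent_map_exp:
  assumes "finite (set_pmf P)"
  shows "ent (map_pmf f P) = - (\<Sum>a\<in>set_pmf P. pmf P a * log 2 (pmf (map_pmf f P) (f a)))"
  using exp_map[OF assms, of "\<lambda>b. log 2 (pmf (map_pmf f P) b)" f]
  by (simp add: ent_def mult.commute)

lemma ent_exp:
  assumes "finite (set_pmf P)"
  shows "ent P = - (\<Sum>a\<in>set_pmf P. pmf P a * log 2 (pmf P a))"
  by (simp add: ent_def)

lemma pmf_le_map: "pmf P a \<le> pmf (map_pmf f P) (f a)"
proof -
  have "pmf P a = measure_pmf.prob P {a}" by (simp add: measure_pmf_single)
  also have "\<dots> \<le> measure_pmf.prob P (f -` {f a})"
    by (rule measure_pmf.finite_measure_mono) auto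
  also have "\<dots> = pmf (map_pmf f P) (f a)" by (simp add: pmf_map)
  finally show ?thesis .
qed

lemma ent_map_le:
  assumes "finite (set_pmf P)"
  shows "ent (map_pmf f P) \<le> ent P"
  unfolding ent_map_exp[OF assms] ent_exp[OF assms] neg_le_iff_le
proof (rule sum_mono)
  fix a assume a: "a \<in> set_pmf P"
  hence "0 < pmf P a" by (simp add: pmf_positive)
  moreover have "pmf P a \<le> pmf (map_pmf f P) (f a)" by (rule pmf_le_map)
  ultimately show "pmf P a * log 2 (pmf P a) \<le> pmf P a * log 2 (pmf (map_pmf f P) (f a))"
    by (intro mult_left_mono) auto
qed

lemma ent_map_inj:
  assumes "finite (set_pmf P)" "inj_on f (set_pmf P)"
  shows "ent (map_pmf f P) = ent P"
  unfolding ent_map_exp[OF assms(1)] ent_exp[OF assms(1)]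
  using assms(2) by (simp add: pmf_map_inj)

lemma gibbs:
  assumes fin: "finite (set_pmf P)" and pos: "\<And>a. a \<in> set_pmf P \<Longrightarrow> w a > 0"
    and sw: "(\<Sum>a\<in>set_pmf P. w a) \<le> 1"
  shows "ent P \<le> - (\<Sum>a\<in>set_pmf P. pmf P a * log 2 (w a))"
proof -
  have "ent P + (\<Sum>a\<in>set_pmf P. pmf P a * log 2 (w a))
      = (\<Sum>a\<in>set_pmf P. pmf P a * (ln (w a / pmf P a) / ln 2))"
  proof -
    have "ent P + (\<Sum>a\<in>set_pmf P. pmf P a * log 2 (w a))
      = (\<Sum>a\<in>set_pmf P. pmf P a * log 2 (w a) - pmf P a * log 2 (pmf P a))"
      by (simp add: ent_def sum_subtractf)
    also have "\<dots> = (\<Sum>a\<in>set_pmf P. pmf P a * (ln (w a / pmf P a) / ln 2))"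
    proof (rule sum.cong)
      fix a assume a: "a \<in> set_pmf P"
      have "ln (w a / pmf P a) = ln (w a) - ln (pmf P a)"
        using a pos pmf_positive by (intro ln_divide_pos) auto
      thus "pmf P a * log 2 (w a) - pmf P a * log 2 (pmf P a) = pmf P a * (ln (w a / pmf P a) / ln 2)"
        by (simp add: log_def diff_divide_distrib right_diff_distrib)
    qed simp
    finally show ?thesis .
  qed
  also have "\<dots> \<le> (\<Sum>a\<in>set_pmf P. pmf P a * ((w a / pmf P a - 1) / ln 2))"
  proof (rule sum_mono)
    fix a assume a: "a \<in> set_pmf P"
    have "ln (w a / pmf P a) \<le> w a / pmf P a - 1"
      using pos[OF a] pmf_positive[OF a] by (intro ln_le_minus_one divide_pos_pos)
    thus "pmf P a * (ln (w a / pmf P a) / ln 2) \<le> pmf P a * ((w a / pmf P a - 1) / ln 2)"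
      by (intro mult_left_mono divide_right_mono) auto
  qed
  also have "\<dots> = (\<Sum>a\<in>set_pmf P. (w a - pmf P a) / ln 2)"
  proof (rule sum.cong)
    fix a assume a: "a \<in> set_pmf P"
    hence "pmf P a > 0" by (rule pmf_positive)
    thus "pmf P a * ((w a / pmf P a - 1) / ln 2) = (w a - pmf P a) / ln 2"
      by (simp add: field_simps)
  qed simp
  also have "\<dots> = ((\<Sum>a\<in>set_pmf P. w a) - (\<Sum>a\<in>set_pmf P. pmf P a)) / ln 2"
    by (simp only: sum_divide_distrib[symmetric] sum_subtractf)
  also have "(\<Sum>a\<in>set_pmf P. pmf P a) = 1" using fin by (simp add: sum_pmf_eq_1)
  also have "((\<Sum>a\<in>set_pmf P. w a) - 1) / ln 2 \<le> 0"
    using sw by (simp add: divide_nonpos_pos)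
  finally show ?thesis by linarith
qed


lemma marg_sum:
  assumes "finite Y" "fst ` set_pmf B \<subseteq> Y"
  shows "(\<Sum>y\<in>Y. pmf B (y,c)) = pmf (map_pmf snd B) c"
proof -
  have "pmf (map_pmf snd B) c = measure_pmf.prob B (snd -` {c} \<inter> set_pmf B)"
    by (simp add: pmf_map measure_Int_set_pmf)
  also have "snd -` {c} \<inter> set_pmf B = (Y \<times> {c}) \<inter> set_pmf B"
    using assms(2) by force
  also have "measure_pmf.prob B \<dots> = measure_pmf.prob B (Y \<times> {c})"
    by (simp add: measure_Int_set_pmf)
  also have "\<dots> = sum (pmf B) (Y \<times> {c})"
    using assms(1) by (simp add: measure_measure_pmf_finite)
  also have "Y \<times> {c} = (\<lambda>y. (y,c)) ` Y" by auto
  also have "sum (pmf B) \<dots> = (\<Sum>y\<in>Y. pmf B (y,c))"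
    by (subst sum.reindex) (auto simp: inj_on_def)
  finally show ?thesis ..
qed

lemma ent_pair_le:
  assumes fin: "finite (set_pmf P)"
  shows "ent P \<le> ent (map_pmf fst P) + ent (map_pmf snd P)"
proof -
  define A where "A = map_pmf fst P"
  define B where "B = map_pmf snd P"
  define w where "w t = pmf A (fst t) * pmf B (snd t)" for t
  have finA: "finite (set_pmf A)" and finB: "finite (set_pmf B)"
    using fin by (auto simp: A_def B_def)
  have posA: "pmf A (fst t) > 0" and posB: "pmf B (snd t) > 0" if t: "t \<in> set_pmf P" for t
  proof -
    have "pmf P t > 0" using t by (rule pmf_positive)
    thus "pmf A (fst t) > 0" "pmf B (snd t) > 0"
      using pmf_le_map[of P t fst] pmf_le_map[of P t snd] by (auto simp: A_def B_def)
  qed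
  have "ent P \<le> - (\<Sum>t\<in>set_pmf P. pmf P t * log 2 (w t))"
  proof (rule gibbs[OF fin])
    show "\<And>a. a \<in> set_pmf P \<Longrightarrow> 0 < w a" using posA posB by (simp add: w_def)
    have "(\<Sum>t\<in>set_pmf P. w t) \<le> (\<Sum>t\<in>set_pmf A \<times> set_pmf B. w t)"
      using finA finB by (intro sum_mono2) (auto simp: A_def B_def w_def intro: rev_image_eqI)
    also have "\<dots> = (\<Sum>a\<in>set_pmf A. pmf A a) * (\<Sum>b\<in>set_pmf B. pmf B b)"
      by (simp add: sum_product sum.cartesian_product w_def case_prod_beta')
    also have "\<dots> = 1" using finA finB by (simp add: sum_pmf_eq_1)
    finally show "(\<Sum>t\<in>set_pmf P. w t) \<le> 1" .
  qed
  also have "(\<Sum>t\<in>set_pmf P. pmf P t * log 2 (w t))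
      = (\<Sum>t\<in>set_pmf P. pmf P t * log 2 (pmf A (fst t))) + (\<Sum>t\<in>set_pmf P. pmf P t * log 2 (pmf B (snd t)))"
    by (subst sum.distrib[symmetric], rule sum.cong)
       (auto simp: w_def log_mult posA posB distrib_left dest: posA posB)
  also have "- \<dots> = ent A + ent B"
    unfolding A_def B_def ent_map_exp[OF fin] by simp
  finally show ?thesis by (simp add: A_def B_def)
qed


lemma pos_map: "t \<in> set_pmf M \<Longrightarrow> pmf (map_pmf F M) (F t) > 0"
  using pmf_le_map[of M t F] pmf_positive[of t M] by linarith

definition gQ :: "('x \<times> 'y \<times> nat) pmf \<Rightarrow> nat \<Rightarrow> 'x \<Rightarrow> real" where
  "gQ r q = (\<lambda>x'. pmf (map_pmf (\<lambda>(x,y,q). (x,q)) r) (x',q) / pmf (map_pmf (\<lambda>(x,y,q). q) r) q)"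

lemma feasible_cond:
  assumes r: "r \<in> couplings p" "markov (XQY r)" "markov r" and t: "(x,y,q) \<in> set_pmf r"
  shows "condX p y = gQ r q"
proof
  fix x'
  have p: "p = map_pmf (\<lambda>(x,y,q). (x,y)) r" using r(1) by (simp add: couplings_def)
  define D where "D = pmf r (x',y,q)"
  define PY where "PY = pmf (map_pmf (\<lambda>(a,b,c). b) r) y"
  define RYQ where "RYQ = pmf (map_pmf (\<lambda>(a,b,c). (b,c)) r) (y,q)"
  define RQ where "RQ = pmf (map_pmf (\<lambda>(x,y,q). q) r) q"
  define RXQ where "RXQ = pmf (map_pmf (\<lambda>(x,y,q). (x,q)) r) (x',q)"
  have e1: "D * PY = pmf p (x',y) * RYQ"
    using r(3) unfolding markov_def D_def PY_def RYQ_def p by blast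
  have m2: "pmf (XQY r) (x',q,y) * pmf (map_pmf (\<lambda>(a,b,c). b) (XQY r)) q =
     pmf (map_pmf (\<lambda>(a,b,c). (a,b)) (XQY r)) (x',q) * pmf (map_pmf (\<lambda>(a,b,c). (b,c)) (XQY r)) (q,y)"
    using r(2) unfolding markov_def by blast
  have "pmf (XQY r) (x',q,y) = D"
  proof -
    have "pmf (XQY r) ((\<lambda>(x,y,q). (x,q,y)) (x',y,q)) = D"
      unfolding XQY_def D_def by (rule pmf_map_inj') (auto simp: inj_on_def)
    thus ?thesis by simp
  qed
  moreover have "map_pmf (\<lambda>(a,b,c). b) (XQY r) = map_pmf (\<lambda>(x,y,q). q) r"
    unfolding XQY_def by (simp add: map_pmf_comp case_prod_beta')
  moreover have "map_pmf (\<lambda>(a,b,c). (a,b)) (XQY r) = map_pmf (\<lambda>(x,y,q). (x,q)) r"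
    unfolding XQY_def by (simp add: map_pmf_comp case_prod_beta')
  moreover have "pmf (map_pmf (\<lambda>(a,b,c). (b,c)) (XQY r)) (q,y) = RYQ"
  proof -
    have "map_pmf (\<lambda>(a,b,c). (b,c)) (XQY r) = map_pmf prod.swap (map_pmf (\<lambda>(a,b,c). (b,c)) r)"
      unfolding XQY_def by (simp add: map_pmf_comp case_prod_beta' prod.swap_def)
    moreover have "pmf (map_pmf prod.swap (map_pmf (\<lambda>(a,b,c). (b,c)) r)) (prod.swap (y,q)) = RYQ"
      unfolding RYQ_def by (rule pmf_map_inj') simp
    ultimately show ?thesis by simp
  qed
  ultimately have e2: "D * RQ = RXQ * RYQ" using m2 by (simp add: RQ_def RXQ_def)
  have "RYQ > 0" unfolding RYQ_def using pos_map[OF t, of "\<lambda>(a,b,c). (b,c)"] by simp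
  moreover have "PY > 0" unfolding PY_def using pos_map[OF t, of "\<lambda>(a,b,c). b"] by simp
  moreover have "RQ > 0" unfolding RQ_def using pos_map[OF t, of "\<lambda>(x,y,q). q"] by simp
  moreover have "pmf (map_pmf snd p) y = PY"
    unfolding PY_def p by (simp add: map_pmf_comp case_prod_beta')
  ultimately show "condX p y x' = gQ r q x'"
    using e1 e2 unfolding condX_def gQ_def RQ_def[symmetric] RXQ_def[symmetric]
  proof -
    assume a: "0 < RYQ" "0 < PY" "0 < RQ" "pmf (map_pmf snd p) y = PY"
    have "RQ * pmf p (x',y) * RYQ = RXQ * PY * RYQ"
    proof -
      have "RQ * pmf p (x',y) * RYQ = RQ * (D * PY)" using e1 by simp
      also have "\<dots> = (D * RQ) * PY" by simp
      also have "\<dots> = RXQ * PY * RYQ" using e2 by simp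
      finally show ?thesis .
    qed
    hence "RQ * pmf p (x',y) = RXQ * PY" using a(1) by simp
    thus "pmf p (x', y) / pmf (map_pmf snd p) y = RXQ / RQ"
      using a by (simp add: field_simps)
  qed
qed

lemma feasible_maps:
  assumes r: "r \<in> couplings p" "markov (XQY r)" "markov r"
  shows "QYX p = map_pmf (\<lambda>(x,y,q). gQ r q) r"
    and "Y_QYX p = map_pmf (\<lambda>(x,y,q). (y, gQ r q)) r"
proof -
  have p: "p = map_pmf (\<lambda>(x,y,q). (x,y)) r" using r(1) by (simp add: couplings_def)
  have "QYX p = map_pmf (\<lambda>(x,y). condX p y) (map_pmf (\<lambda>(x,y,q). (x,y)) r)"
    unfolding QYX_def by (rule arg_cong[where f="map_pmf (\<lambda>(x,y). condX p y)", OF p])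
  also have "\<dots> = map_pmf (\<lambda>(x,y,q). gQ r q) r"
    unfolding map_pmf_comp
    by (rule map_pmf_cong) (auto simp: feasible_cond[OF r])
  finally show "QYX p = map_pmf (\<lambda>(x,y,q). gQ r q) r" .
  have "Y_QYX p = map_pmf (\<lambda>(x,y). (y, condX p y)) (map_pmf (\<lambda>(x,y,q). (x,y)) r)"
    unfolding Y_QYX_def by (rule arg_cong[where f="map_pmf (\<lambda>(x,y). (y, condX p y))", OF p])
  also have "\<dots> = map_pmf (\<lambda>(x,y,q). (y, gQ r q)) r"
    unfolding map_pmf_comp
    by (rule map_pmf_cong) (auto simp: feasible_cond[OF r])
  finally show "Y_QYX p = map_pmf (\<lambda>(x,y,q). (y, gQ r q)) r" .
qed


lemma CW_lower:
  assumes r: "r \<in> couplings p" "markov (XQY r)" "markov r"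
  shows "ent (QYX p) \<le> ent (map_pmf (\<lambda>(x,y,q). q) r)"
proof -
  have fin: "finite (set_pmf r)" using r(1) by (simp add: couplings_def)
  have "QYX p = map_pmf (gQ r) (map_pmf (\<lambda>(x,y,q). q) r)"
    unfolding feasible_maps(1)[OF r] map_pmf_comp by (simp add: case_prod_beta')
  thus ?thesis using fin by (simp add: ent_map_le)
qed

lemma PW_upper:
  assumes r: "r \<in> couplings p" "markov (XQY r)" "markov r"
  shows "cond_ent (map_pmf (\<lambda>(x,y,q). (y,q)) r) \<le> cond_ent (Y_QYX p)"
proof -
  have fin: "finite (set_pmf r)" using r(1) by (simp add: couplings_def)
  define A where "A = map_pmf (\<lambda>(x,y,q). (y,q)) r"
  define RQ where "RQ = map_pmf (\<lambda>(x,y,q). q) r"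
  define Bm where "Bm = map_pmf (\<lambda>(x,y,q). (y, gQ r q)) r"
  define BG where "BG = map_pmf (\<lambda>(x,y,q). gQ r q) r"
  define w where "w s = pmf RQ (snd s) * pmf Bm (fst s, gQ r (snd s)) / pmf BG (gQ r (snd s))" for s
  have finA: "finite (set_pmf A)" and finRQ: "finite (set_pmf RQ)" and finBm: "finite (set_pmf Bm)"
    using fin by (auto simp: A_def RQ_def Bm_def)
  have sA: "map_pmf snd A = RQ" unfolding A_def RQ_def map_pmf_comp by (simp add: case_prod_beta')
  have sB: "map_pmf snd Bm = BG" unfolding Bm_def BG_def map_pmf_comp by (simp add: case_prod_beta')
  have Y: "Y_QYX p = Bm" unfolding Bm_def by (rule feasible_maps(2)[OF r])
  have pos: "pmf RQ q > 0" "pmf Bm (y, gQ r q) > 0" "pmf BG (gQ r q) > 0"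
    if t: "(x,y,q) \<in> set_pmf r" for x y q
    using pos_map[OF t, of "\<lambda>(x,y,q). q"] pos_map[OF t, of "\<lambda>(x,y,q). (y, gQ r q)"]
      pos_map[OF t, of "\<lambda>(x,y,q). gQ r q"]
    by (auto simp: RQ_def Bm_def BG_def)
  have posBG: "pmf BG (gQ r q) > 0" if q: "q \<in> set_pmf RQ" for q
    using q pos unfolding RQ_def by auto
  have "ent A \<le> - (\<Sum>s\<in>set_pmf A. pmf A s * log 2 (w s))"
  proof (rule gibbs[OF finA])
    show "\<And>s. s \<in> set_pmf A \<Longrightarrow> 0 < w s"
      using pos unfolding A_def w_def by (auto intro!: divide_pos_pos mult_pos_pos)
    have "(\<Sum>s\<in>set_pmf A. w s) \<le> (\<Sum>s\<in>(fst ` set_pmf Bm) \<times> set_pmf RQ. w s)"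
    proof (intro sum_mono2)
      show "finite (fst ` set_pmf Bm \<times> set_pmf RQ)" using finBm finRQ by auto
      show "set_pmf A \<subseteq> fst ` set_pmf Bm \<times> set_pmf RQ"
        unfolding A_def Bm_def RQ_def by (force intro: rev_image_eqI)
      show "\<And>b. b \<in> fst ` set_pmf Bm \<times> set_pmf RQ - set_pmf A \<Longrightarrow> 0 \<le> w b"
        by (auto simp: w_def)
    qed
    also have "\<dots> = (\<Sum>y\<in>fst ` set_pmf Bm. \<Sum>q\<in>set_pmf RQ. w (y,q))"
      by (simp add: sum.cartesian_product case_prod_beta')
    also have "\<dots> = (\<Sum>q\<in>set_pmf RQ. \<Sum>y\<in>fst ` set_pmf Bm. w (y,q))"
      by (rule sum.swap)
    also have "\<dots> = (\<Sum>q\<in>set_pmf RQ. pmf RQ q / pmf BG (gQ r q) * (\<Sum>y\<in>fst ` set_pmf Bm. pmf Bm (y, gQ r q)))"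
      by (simp add: w_def sum_distrib_left)
    also have "\<dots> = (\<Sum>q\<in>set_pmf RQ. pmf RQ q)"
    proof (rule sum.cong)
      fix q assume q: "q \<in> set_pmf RQ"
      have "(\<Sum>y\<in>fst ` set_pmf Bm. pmf Bm (y, gQ r q)) = pmf BG (gQ r q)"
        using finBm by (subst marg_sum) (auto simp: sB)
      thus "pmf RQ q / pmf BG (gQ r q) * (\<Sum>y\<in>fst ` set_pmf Bm. pmf Bm (y, gQ r q)) = pmf RQ q"
        using posBG[OF q] by simp
    qed simp
    also have "\<dots> = 1" using finRQ by (simp add: sum_pmf_eq_1)
    finally show "(\<Sum>s\<in>set_pmf A. w s) \<le> 1" .
  qed
  also have "(\<Sum>s\<in>set_pmf A. pmf A s * log 2 (w s))
     = (\<Sum>t\<in>set_pmf r. log 2 (w ((\<lambda>(x,y,q). (y,q)) t)) * pmf r t)"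
    unfolding A_def by (subst exp_map[OF fin]) (simp add: mult.commute)
  also have "\<dots> = (\<Sum>t\<in>set_pmf r. pmf r t * log 2 (pmf RQ ((\<lambda>(x,y,q). q) t)))
       + (\<Sum>t\<in>set_pmf r. pmf r t * log 2 (pmf Bm ((\<lambda>(x,y,q). (y, gQ r q)) t)))
       - (\<Sum>t\<in>set_pmf r. pmf r t * log 2 (pmf BG ((\<lambda>(x,y,q). gQ r q) t)))"
    unfolding sum.distrib[symmetric] sum_subtractf[symmetric]
  proof (rule sum.cong)
    fix t assume t: "t \<in> set_pmf r"
    obtain x y q where tt: "t = (x,y,q)" by (cases t) auto
    have p3: "pmf RQ q > 0" "pmf Bm (y, gQ r q) > 0" "pmf BG (gQ r q) > 0"
      using pos[of x y q] t tt by auto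
    show "log 2 (w ((\<lambda>(x,y,q). (y,q)) t)) * pmf r t =
      pmf r t * log 2 (pmf RQ ((\<lambda>(x,y,q). q) t)) + pmf r t * log 2 (pmf Bm ((\<lambda>(x,y,q). (y, gQ r q)) t))
      - pmf r t * log 2 (pmf BG ((\<lambda>(x,y,q). gQ r q) t))"
      using p3 by (simp add: tt w_def log_divide log_mult algebra_simps)
  qed simp
  finally have "ent A \<le> ent RQ + ent Bm - ent BG"
    unfolding RQ_def Bm_def BG_def ent_map_exp[OF fin] by simp
  thus ?thesis unfolding cond_ent_def Y sB A_def[symmetric] using sA by simp
qed


lemma pmf_map_notin: "v \<notin> f ` set_pmf M \<Longrightarrow> pmf (map_pmf f M) v = 0"
  by (simp add: pmf_eq_0_set_pmf)

lemma pmf_map_pair_sum: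
  assumes "finite (set_pmf p)"
  shows "pmf (map_pmf (\<lambda>(x,y). (x, h y)) p) (a,q) = (\<Sum>y'\<in>{y'\<in>snd ` set_pmf p. h y' = q}. pmf p (a,y'))"
proof -
  define Yq where "Yq = {y'\<in>snd ` set_pmf p. h y' = q}"
  have finY: "finite Yq" using assms unfolding Yq_def by auto
  have "pmf (map_pmf (\<lambda>(x,y). (x, h y)) p) (a,q)
      = measure_pmf.prob p ((\<lambda>(x,y). (x, h y)) -` {(a,q)} \<inter> set_pmf p)"
    by (simp add: pmf_map measure_Int_set_pmf)
  also have "(\<lambda>(x,y). (x, h y)) -` {(a,q)} \<inter> set_pmf p = ({a} \<times> Yq) \<inter> set_pmf p"
    unfolding Yq_def by (force intro: rev_image_eqI)
  also have "measure_pmf.prob p \<dots> = measure_pmf.prob p ({a} \<times> Yq)"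
    by (simp add: measure_Int_set_pmf)
  also have "\<dots> = sum (pmf p) ({a} \<times> Yq)"
    using finY by (simp add: measure_measure_pmf_finite)
  also have "{a} \<times> Yq = (\<lambda>y. (a,y)) ` Yq" by auto
  also have "sum (pmf p) \<dots> = (\<Sum>y\<in>Yq. pmf p (a,y))"
    by (subst sum.reindex) (auto simp: inj_on_def)
  finally show ?thesis unfolding Yq_def .
qed

context
  fixes p :: "('x \<times> 'y) pmf" and e :: "('x \<Rightarrow> real) \<Rightarrow> nat"
  assumes fin: "finite (set_pmf p)"
    and inj: "inj_on e ((\<lambda>y. condX p y) ` snd ` set_pmf p)"
begin

definition "h0 y = e (condX p y)"
definition "r0 = map_pmf (\<lambda>(x,y). (x,y,h0 y)) p"

lemma r0_pmf: "pmf r0 (a,b,c) = (if c = h0 b then pmf p (a,b) else 0)"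
proof (cases "c = h0 b")
  case True
  have "pmf (map_pmf (\<lambda>z. (fst z, snd z, h0 (snd z))) p) ((\<lambda>z. (fst z, snd z, h0 (snd z))) (a,b)) = pmf p (a,b)"
    by (rule pmf_map_inj') (auto simp: inj_def)
  thus ?thesis using True by (simp add: r0_def case_prod_beta')
next
  case False
  thus ?thesis unfolding r0_def by (subst pmf_map_notin) auto
qed

lemma XQY_r0_pmf: "pmf (XQY r0) (a,q,y) = (if q = h0 y then pmf p (a,y) else 0)"
proof -
  have X: "XQY r0 = map_pmf (\<lambda>z. (fst z, h0 (snd z), snd z)) p"
    unfolding XQY_def r0_def map_pmf_comp by (simp add: case_prod_beta')
  show ?thesis
  proof (cases "q = h0 y")
    case True
    have "pmf (map_pmf (\<lambda>z. (fst z, h0 (snd z), snd z)) p) ((\<lambda>z. (fst z, h0 (snd z), snd z)) (a,y)) = pmf p (a,y)"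
      by (rule pmf_map_inj') (auto simp: inj_def)
    thus ?thesis using True X by simp
  next
    case False
    thus ?thesis unfolding X by (subst pmf_map_notin) auto
  qed
qed

lemma graph_pmf: "pmf (map_pmf (\<lambda>z. (z, k z)) M) (z,c) = (if c = k z then pmf M z else 0)"
proof (cases "c = k z")
  case True
  have "pmf (map_pmf (\<lambda>z. (z, k z)) M) ((\<lambda>z. (z, k z)) z) = pmf M z"
    by (rule pmf_map_inj') (auto simp: inj_def)
  thus ?thesis using True by simp
next
  case False thus ?thesis by (subst pmf_map_notin) auto
qed

lemma graph_pmf': "pmf (map_pmf (\<lambda>z. (k z, z)) M) (c,z) = (if c = k z then pmf M z else 0)"
proof (cases "c = k z")
  case True
  have "pmf (map_pmf (\<lambda>z. (k z, z)) M) ((\<lambda>z. (k z, z)) z) = pmf M z"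
    by (rule pmf_map_inj') (auto simp: inj_def)
  thus ?thesis using True by simp
next
  case False thus ?thesis by (subst pmf_map_notin) auto
qed

lemma r0_coup: "r0 \<in> couplings p"
  unfolding couplings_def r0_def using fin by (simp add: map_pmf_comp case_prod_beta')

lemma r0_markov: "markov r0"
proof -
  have 1: "map_pmf (\<lambda>(a,b,c). b) r0 = map_pmf snd p"
    unfolding r0_def map_pmf_comp by (simp add: case_prod_beta')
  have 2: "map_pmf (\<lambda>(a,b,c). (a,b)) r0 = p"
    unfolding r0_def map_pmf_comp by (simp add: case_prod_beta')
  have 3: "map_pmf (\<lambda>(a,b,c). (b,c)) r0 = map_pmf (\<lambda>y. (y, h0 y)) (map_pmf snd p)"
    unfolding r0_def map_pmf_comp by (simp add: case_prod_beta')
  show ?thesis unfolding markov_def 1 2 3 r0_pmf graph_pmf by simp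
qed

lemma key:
  "pmf p (a,y) * pmf (map_pmf h0 (map_pmf snd p)) (h0 y)
   = pmf (map_pmf (\<lambda>(x,y). (x, h0 y)) p) (a, h0 y) * pmf (map_pmf snd p) y"
proof (cases "pmf (map_pmf snd p) y = 0")
  case True
  have "pmf p (a,y) \<le> pmf (map_pmf snd p) y" using pmf_le_map[of p "(a,y)" snd] by simp
  hence "pmf p (a,y) = 0" using True pmf_nonneg[of p "(a,y)"] by linarith
  thus ?thesis using True by simp
next
  case False
  define Yq where "Yq = {y'\<in>snd ` set_pmf p. h0 y' = h0 y}"
  define c where "c = condX p y"
  have ySupp: "y \<in> snd ` set_pmf p" using False by (simp add: pmf_eq_0_set_pmf)
  have eq: "pmf p (a,y') = c a * pmf (map_pmf snd p) y'" if y': "y' \<in> Yq" for y'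
  proof -
    have "y' \<in> snd ` set_pmf p" "h0 y' = h0 y" using y' by (auto simp: Yq_def)
    hence "condX p y' = condX p y"
      using inj ySupp unfolding h0_def by (auto dest: inj_onD)
    moreover have "pmf (map_pmf snd p) y' \<noteq> 0"
      using \<open>y' \<in> snd ` set_pmf p\<close> by (simp add: pmf_eq_0_set_pmf)
    ultimately show ?thesis unfolding c_def condX_def[of p y] condX_def[of p y', symmetric]
      by (metis condX_def nonzero_eq_divide_eq)
  qed
  have R1: "pmf (map_pmf (\<lambda>(x,y). (x, h0 y)) p) (a, h0 y) = c a * (\<Sum>y'\<in>Yq. pmf (map_pmf snd p) y')"
    unfolding pmf_map_pair_sum[OF fin] Yq_def[symmetric] sum_distrib_left
    by (rule sum.cong) (auto simp: eq)
  have R2: "pmf (map_pmf h0 (map_pmf snd p)) (h0 y) = (\<Sum>y'\<in>Yq. pmf (map_pmf snd p) y')"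
    using fin by (subst pmf_map_sum) (auto simp: Yq_def sum.inter_filter[symmetric])
  have "pmf p (a,y) = c a * pmf (map_pmf snd p) y"
    using False unfolding c_def condX_def by simp
  thus ?thesis unfolding R1 R2 by simp
qed

lemma r0_markov2: "markov (XQY r0)"
proof -
  have 1: "map_pmf (\<lambda>(a,b,c). b) (XQY r0) = map_pmf h0 (map_pmf snd p)"
    unfolding XQY_def r0_def map_pmf_comp by (simp add: case_prod_beta')
  have 2: "map_pmf (\<lambda>(a,b,c). (a,b)) (XQY r0) = map_pmf (\<lambda>(x,y). (x, h0 y)) p"
    unfolding XQY_def r0_def map_pmf_comp by (simp add: case_prod_beta')
  have 3: "map_pmf (\<lambda>(a,b,c). (b,c)) (XQY r0) = map_pmf (\<lambda>y. (h0 y, y)) (map_pmf snd p)"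
    unfolding XQY_def r0_def map_pmf_comp by (simp add: case_prod_beta')
  show ?thesis unfolding markov_def 1 2 3 XQY_r0_pmf graph_pmf' using key by simp
qed

end


theorem theorem1:
  fixes p :: "('x \<times> 'y) pmf"
  assumes "finite (set_pmf p)"
  shows "tilde_CW p = ent (QYX p)
       \<and> tilde_PW p = cond_ent (Y_QYX p)
       \<and> (ent (map_pmf snd p) = tilde_CW p + tilde_PW p
          \<and> tilde_CW p + tilde_PW p = ent (QYX p) + cond_ent (Y_QYX p))
       \<and> wyner_CW p \<le> tilde_CW p"
proof -
  note fin = assms
  define F where "F = (\<lambda>y. condX p y) ` snd ` set_pmf p"
  have "finite F" using fin unfolding F_def by auto
  then obtain e :: "('x \<Rightarrow> real) \<Rightarrow> nat" where inj: "inj_on e F"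
    using finite_imp_inj_to_nat_seg by blast
  define R where "R = r0 p e"
  have Rc: "R \<in> couplings p" and Rm1: "markov (XQY R)" and Rm2: "markov R"
    unfolding R_def using r0_coup r0_markov r0_markov2 fin inj unfolding F_def by blast+
  have finR: "finite (set_pmf R)" using Rc by (simp add: couplings_def)
  have setQ: "set_pmf (QYX p) \<subseteq> F" unfolding QYX_def F_def by (force intro: rev_image_eqI)
  have QR: "map_pmf (\<lambda>(x,y,q). q) R = map_pmf e (QYX p)"
    unfolding R_def r0_def[OF fin inj[unfolded F_def]] QYX_def map_pmf_comp
    by (simp add: case_prod_beta' h0_def[OF fin inj[unfolded F_def]])
  have finQ: "finite (set_pmf (QYX p))" using fin unfolding QYX_def by simp
  have finYQ: "finite (set_pmf (Y_QYX p))" using fin unfolding Y_QYX_def by simp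
  have entQ: "ent (map_pmf (\<lambda>(x,y,q). q) R) = ent (QYX p)"
    unfolding QR using finQ inj setQ by (intro ent_map_inj) (auto intro: inj_on_subset)
  have sY: "map_pmf snd (Y_QYX p) = QYX p"
    unfolding Y_QYX_def QYX_def map_pmf_comp by (simp add: case_prod_beta')
  have AR: "map_pmf (\<lambda>(x,y,q). (y,q)) R = map_pmf (\<lambda>(y,c). (y, e c)) (Y_QYX p)"
    unfolding R_def r0_def[OF fin inj[unfolded F_def]] Y_QYX_def map_pmf_comp
    by (simp add: case_prod_beta' h0_def[OF fin inj[unfolded F_def]])
  have condR: "cond_ent (map_pmf (\<lambda>(x,y,q). (y,q)) R) = cond_ent (Y_QYX p)"
  proof -
    have setYQ: "set_pmf (Y_QYX p) \<subseteq> UNIV \<times> F" unfolding Y_QYX_def F_def by (force intro: rev_image_eqI)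
    have "inj_on (\<lambda>(y,c). (y, e c)) (set_pmf (Y_QYX p))"
    proof (rule inj_onI)
      fix u v assume u: "u \<in> set_pmf (Y_QYX p)" and v: "v \<in> set_pmf (Y_QYX p)"
        and eq: "(\<lambda>(y,c). (y, e c)) u = (\<lambda>(y,c). (y, e c)) v"
      have "snd u \<in> F" "snd v \<in> F" using setYQ u v by auto
      moreover from eq have "fst u = fst v" "e (snd u) = e (snd v)" by (auto simp: case_prod_beta')
      ultimately have "snd u = snd v" "fst u = fst v" using inj_onD[OF inj] by auto
      thus "u = v" by (simp add: prod_eq_iff)
    qed
    hence "ent (map_pmf (\<lambda>(y,c). (y, e c)) (Y_QYX p)) = ent (Y_QYX p)"
      using finYQ by (intro ent_map_inj)
    moreover have "map_pmf snd (map_pmf (\<lambda>(y,c). (y, e c)) (Y_QYX p)) = map_pmf e (QYX p)"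
      unfolding sY[symmetric] map_pmf_comp by (simp add: case_prod_beta')
    ultimately show ?thesis unfolding cond_ent_def AR sY
      using entQ QR by simp
  qed
  have a: "tilde_CW p = ent (QYX p)"
    unfolding tilde_CW_def
  proof (rule cInf_eq_minimum)
    show "ent (QYX p) \<in> {ent (map_pmf (\<lambda>(x,y,q). q) r) |r. r \<in> couplings p \<and> markov (XQY r) \<and> markov r}"
      using Rc Rm1 Rm2 entQ by (metis (mono_tags, lifting) mem_Collect_eq)
  next
    fix v assume "v \<in> {ent (map_pmf (\<lambda>(x,y,q). q) r) |r. r \<in> couplings p \<and> markov (XQY r) \<and> markov r}"
    then obtain r where r: "r \<in> couplings p" "markov (XQY r)" "markov r"
      and v: "v = ent (map_pmf (\<lambda>(x,y,q). q) r)" by blast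
    show "ent (QYX p) \<le> v" unfolding v by (rule CW_lower[OF r])
  qed
  have b: "tilde_PW p = cond_ent (Y_QYX p)"
    unfolding tilde_PW_def
  proof (rule cSup_eq_maximum)
    show "cond_ent (Y_QYX p) \<in> {cond_ent (map_pmf (\<lambda>(x,y,q). (y,q)) r) |r. r \<in> couplings p \<and> markov (XQY r) \<and> markov r}"
      using Rc Rm1 Rm2 condR by (metis (mono_tags, lifting) mem_Collect_eq)
  next
    fix v assume "v \<in> {cond_ent (map_pmf (\<lambda>(x,y,q). (y,q)) r) |r. r \<in> couplings p \<and> markov (XQY r) \<and> markov r}"
    then obtain r where r: "r \<in> couplings p" "markov (XQY r)" "markov r"
      and v: "v = cond_ent (map_pmf (\<lambda>(x,y,q). (y,q)) r)" by blast
    show "v \<le> cond_ent (Y_QYX p)" unfolding v by (rule PW_upper[OF r])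
  qed
  have c: "ent (map_pmf snd p) = ent (QYX p) + cond_ent (Y_QYX p)"
  proof -
    have "Y_QYX p = map_pmf (\<lambda>y. (y, condX p y)) (map_pmf snd p)"
      unfolding Y_QYX_def map_pmf_comp by (simp add: case_prod_beta')
    hence "ent (Y_QYX p) = ent (map_pmf snd p)"
      using fin by (simp add: ent_map_inj inj_on_def)
    thus ?thesis unfolding cond_ent_def sY by simp
  qed
  have d: "wyner_CW p \<le> ent (QYX p)"
    unfolding wyner_CW_def
  proof (rule cInf_lower)
    define M where "M = map_pmf (\<lambda>(x,y,q). ((x,y),q)) R"
    have finM: "finite (set_pmf M)" using finR by (simp add: M_def)
    have "map_pmf fst M = p" using Rc unfolding M_def couplings_def map_pmf_comp
      by (simp add: case_prod_beta')
    moreover have "map_pmf snd M = map_pmf (\<lambda>(x,y,q). q) R"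
      unfolding M_def map_pmf_comp by (simp add: case_prod_beta')
    moreover have "ent M = ent p"
    proof -
      have "M = map_pmf (\<lambda>z. (z, h0 p e (snd z))) p"
        unfolding M_def R_def r0_def[OF fin inj[unfolded F_def]] map_pmf_comp by (simp add: case_prod_beta')
      thus ?thesis using fin by (simp add: ent_map_inj inj_on_def)
    qed
    ultimately have "mut_info M = ent (QYX p)" unfolding mut_info_def using entQ by simp
    thus "ent (QYX p) \<in> {mut_info (map_pmf (\<lambda>(x,y,q). ((x,y),q)) r) |r. r \<in> couplings p \<and> markov (XQY r)}"
      using Rc Rm1 unfolding M_def by (metis (mono_tags, lifting) mem_Collect_eq)
    show "bdd_below {mut_info (map_pmf (\<lambda>(x,y,q). ((x,y),q)) r) |r. r \<in> couplings p \<and> markov (XQY r)}"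
    proof (rule bdd_belowI[of _ 0])
      fix v assume "v \<in> {mut_info (map_pmf (\<lambda>(x,y,q). ((x,y),q)) r) |r. r \<in> couplings p \<and> markov (XQY r)}"
      then obtain r where r: "r \<in> couplings p" and v: "v = mut_info (map_pmf (\<lambda>(x,y,q). ((x,y),q)) r)" by blast
      have "finite (set_pmf (map_pmf (\<lambda>(x,y,q). ((x,y),q)) r))" using r by (simp add: couplings_def)
      thus "0 \<le> v" unfolding v mut_info_def using ent_pair_le by fastforce
    qed
  qed
  show ?thesis using a b c d by simp
qed

end
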